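(* Consider the covariate-adaptive randomization design described in the context with $I=2$ covariates, each having 2 levels, and nonnegative weights $w_{o}, w_{m,1}, w_{m,2}, w_{s}$ summing to 1. Assume further that $w_{m,1}=w_{m,2}=:w_{m}$. Then the condition "with $u_{1}=1$, $u_{2}=w_{o}+w_{m,1}$, $u_{3}=w_{o}+w_{m,2}$, $u_{4}=w_{o}$, the solution $\mathbf{x}=(x_1,x_2,x_3)$ of \[ \begin{pmatrix} u_{1} & u_{2} & u_{3}\\ u_{2} & u_{1} & u_{4}\\ u_{3} & u_{4} & u_{1}\end{pmatrix} \begin{pmatrix} x_{1}\\ x_{2}\\ x_{3}\end{pmatrix} =\begin{pmatrix} u_{4}\\ u_{3}\\ u_{2}\end{pmatrix} \] satisfies $|x_{1}|+|x_{2}|+|x_{3}|<1$" is equivalent to \[ w_{m}<C(w_{o}):=\frac{\sqrt{(1-w_{o})^{2}+4(1+w_{o})^{2}}-1-3w_{o}}{4}. \] Hence, if in addition $w_s>0$, the chain $(\mathbf{D}_n)_{n\ge1}$ of within-stratum imbalances is a positive recurrent Markov chain with period 2 on $\mathbb{Z}^4$ whenever $w_m<C(w_o)$.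
   Context: Two treatments (1 and 2) are compared; patients arrive sequentially. There are $I$ covariates, covariate $i$ having $m_i$ levels; a stratum is a covariate profile $(k_1,\ldots,k_I)$ and a margin $(i;k_i)$ is the set of patients whose $i$th covariate is at level $k_i$. Covariate profiles are i.i.d. multinomial over strata. After $n-1$ patients, $D_{n-1}$, $D_{n-1}(i;k_i)$, $D_{n-1}(k_1,\ldots,k_I)$ are the differences (treatment 1 count minus treatment 2 count) overall, on margin $(i;k_i)$, and within stratum. For a new patient in stratum $(k_1^*,\ldots,k_I^* )$, $\mathit{Imb}_n^{(1)}=w_o[D_{n-1}+1]^2+\sum_i w_{m,i}[D_{n-1}(i;k_i^* )+1]^2+w_s[D_{n-1}(k_1^*,\ldots,k_I^* )+1]^2$ and $\mathit{Imb}_n^{(2)}$ is the same with $-1$ replacing $+1$; the patient is assigned to treatment 1 with probability $q$, $p$, or $1/2$ according as $\mathit{Imb}_n^{(1)}>$, $<$, or $=$ $\mathit{Imb}_n^{(2)}$, where $0<q<p<1$, $p+q=1$ (first patient: probability $1/2$). $\mathbf{D}_n$ is the array of within-stratum differences after $n$ patients. *)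

theory Defs
  imports Complex_Main
begin

text \<open>Two binary covariates: a stratum is a pair of levels (k1,k2).
  A state is the array D of within-stratum differences (an element of Z^4).\<close>
type_synonym stratum = "bool \<times> bool"
type_synonym state = "stratum \<Rightarrow> int"

text \<open>Weighted imbalance if the new patient in stratum s is assigned with
  delta = +1 (treatment 1) or delta = -1 (treatment 2).\<close>
definition imb :: "real \<Rightarrow> real \<Rightarrow> real \<Rightarrow> real \<Rightarrow> state \<Rightarrow> stratum \<Rightarrow> int \<Rightarrow> real" where
  "imb wo wm1 wm2 ws D s d =
     wo * (of_int (sum D UNIV + d))^2
   + wm1 * (of_int (D (fst s, False) + D (fst s, True) + d))^2
   + wm2 * (of_int (D (False, snd s) + D (True, snd s) + d))^2
   + ws * (of_int (D s + d))^2"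

definition prob1 :: "real \<Rightarrow> real \<Rightarrow> real \<Rightarrow> real \<Rightarrow> real \<Rightarrow> real \<Rightarrow> state \<Rightarrow> stratum \<Rightarrow> real" where
  "prob1 p q wo wm1 wm2 ws D s =
     (if imb wo wm1 wm2 ws D s 1 > imb wo wm1 wm2 ws D s (-1) then q
      else if imb wo wm1 wm2 ws D s 1 < imb wo wm1 wm2 ws D s (-1) then p
      else 1/2)"

text \<open>One-step expectation operator of the chain: stratum s occurs with probability pr s,
  then D s increases by 1 with probability phi D s, decreases by 1 otherwise.\<close>
definition step :: "(stratum \<Rightarrow> real) \<Rightarrow> (state \<Rightarrow> stratum \<Rightarrow> real) \<Rightarrow> (state \<Rightarrow> real) \<Rightarrow> state \<Rightarrow> real" where
  "step pr phi f x = (\<Sum>s\<in>UNIV. pr s * (phi x s * f (x(s := x s + 1))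
                                       + (1 - phi x s) * f (x(s := x s - 1))))"

primrec Pn :: "(stratum \<Rightarrow> real) \<Rightarrow> (state \<Rightarrow> stratum \<Rightarrow> real) \<Rightarrow> nat \<Rightarrow> state \<Rightarrow> state \<Rightarrow> real" where
  "Pn pr phi 0 x y = (if x = y then 1 else 0)"
| "Pn pr phi (Suc n) x y = step pr phi (\<lambda>z. Pn pr phi n z y) x"

text \<open>First-passage probabilities: probability, starting at x, that the first visit to y
  at a time \<ge> 1 happens at time n.\<close>
primrec fp :: "(stratum \<Rightarrow> real) \<Rightarrow> (state \<Rightarrow> stratum \<Rightarrow> real) \<Rightarrow> nat \<Rightarrow> state \<Rightarrow> state \<Rightarrow> real" where
  "fp pr phi 0 x y = 0"
| "fp pr phi (Suc n) x y =
     step pr phi (\<lambda>z. if z = y then (if n = 0 then 1 else 0) else fp pr phi n z y) x"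

definition pos_recurrent :: "(stratum \<Rightarrow> real) \<Rightarrow> (state \<Rightarrow> stratum \<Rightarrow> real) \<Rightarrow> state \<Rightarrow> bool" where
  "pos_recurrent pr phi x \<longleftrightarrow>
     (\<Sum>n. fp pr phi n x x) = 1 \<and> summable (\<lambda>n. real n * fp pr phi n x x)"

definition period :: "(stratum \<Rightarrow> real) \<Rightarrow> (state \<Rightarrow> stratum \<Rightarrow> real) \<Rightarrow> state \<Rightarrow> nat" where
  "period pr phi x = Gcd {n. 0 < n \<and> 0 < Pn pr phi n x x}"

definition reachable :: "(stratum \<Rightarrow> real) \<Rightarrow> (state \<Rightarrow> stratum \<Rightarrow> real) \<Rightarrow> state \<Rightarrow> state \<Rightarrow> bool" where
  "reachable pr phi x y \<longleftrightarrow> (\<exists>n. 0 < Pn pr phi n x y)"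

definition lin_cond :: "real \<Rightarrow> real \<Rightarrow> real \<Rightarrow> bool" where
  "lin_cond wo wm1 wm2 \<longleftrightarrow>
     (let u1 = 1; u2 = wo + wm1; u3 = wo + wm2; u4 = wo in
      \<exists>x1 x2 x3 :: real.
        u1 * x1 + u2 * x2 + u3 * x3 = u4 \<and>
        u2 * x1 + u1 * x2 + u4 * x3 = u3 \<and>
        u3 * x1 + u4 * x2 + u1 * x3 = u2 \<and>
        \<bar>x1\<bar> + \<bar>x2\<bar> + \<bar>x3\<bar> < 1)"

definition Cfun :: "real \<Rightarrow> real" where
  "Cfun wo = (sqrt ((1 - wo)^2 + 4 * (1 + wo)^2) - 1 - 3 * wo) / 4"

end

theory Submission
  imports Defs
begin

locale chain =
  fixes pr :: "stratum \<Rightarrow> real" and p q wo wm1 wm2 ws :: real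
  assumes pr_pos: "\<And>s. pr s > 0" and pr_sum: "(\<Sum>s\<in>UNIV. pr s) = 1"
   and q_pos: "0 < q" and qp: "q < p" and p1: "p < 1" and pq: "p+q = 1"
   and w0: "wo \<ge> 0" and w1: "wm1\<ge>0" and w2: "wm2\<ge>0" and w3: "ws\<ge>0"
   and wsum: "wo+wm1+wm2+ws = 1"
begin

abbreviation "phi \<equiv> prob1 p q wo wm1 wm2 ws"

lemma phi_bounds: "q \<le> phi x s" "phi x s \<le> p" "q \<le> 1 - phi x s" "0 \<le> phi x s" "phi x s \<le> 1"
  unfolding prob1_def using q_pos qp p1 pq by auto

lemma step_lin: "step pr phi (\<lambda>w. f w + b * g w) x = step pr phi f x + b * step pr phi g x"
proof -
  have "step pr phi (\<lambda>w. f w + b * g w) x = (\<Sum>s\<in>UNIV. pr s * (phi x s * f (x(s := x s + 1)) + (1 - phi x s) * f (x(s := x s - 1)))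
     + b * (pr s * (phi x s * g (x(s := x s + 1)) + (1 - phi x s) * g (x(s := x s - 1)))))"
    unfolding step_def by (rule sum.cong) (auto simp: algebra_simps)
  then show ?thesis unfolding step_def by (simp add: sum.distrib sum_distrib_left)
qed

lemma step_const: "step pr phi (\<lambda>_. c) x = c"
proof -
  have "step pr phi (\<lambda>_. c) x = (\<Sum>s\<in>UNIV. pr s * c)"
    unfolding step_def by (simp add: algebra_simps)
  also have "\<dots> = c" using pr_sum by (simp add: sum_distrib_right[symmetric])
  finally show ?thesis .
qed

lemma step_mono:
  assumes "\<And>s. f (x(s:=x s+1)) \<le> g (x(s:=x s+1))" "\<And>s. f (x(s := x s - 1)) \<le> g (x(s := x s - 1))"
  shows "step pr phi f x \<le> step pr phi g x"
  unfolding step_def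
proof (rule sum_mono)
  fix s
  have a: "phi x s * f (x(s:=x s+1)) \<le> phi x s * g (x(s:=x s+1))"
    using assms(1) phi_bounds by (simp add: mult_left_mono)
  have b: "(1 - phi x s) * f (x(s:=x s-1)) \<le> (1 - phi x s) * g (x(s:=x s-1))"
    using assms(2) phi_bounds by (simp add: mult_left_mono)
  show "pr s * (phi x s * f (x(s := x s + 1)) + (1 - phi x s) * f (x(s := x s - 1)))
         \<le> pr s * (phi x s * g (x(s := x s + 1)) + (1 - phi x s) * g (x(s := x s - 1)))"
    using a b pr_pos[of s] by (intro mult_left_mono) auto
qed

lemma step_ge:
  assumes "\<And>s. 0 \<le> f (x(s:=x s+1))" "\<And>s. 0 \<le> f (x(s := x s - 1))"
  shows "pr s * phi x s * f (x(s:=x s+1)) \<le> step pr phi f x"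
    "pr s * (1 - phi x s) * f (x(s:=x s-1)) \<le> step pr phi f x"
proof -
  let ?t = "\<lambda>s. pr s * (phi x s * f (x(s := x s + 1)) + (1 - phi x s) * f (x(s := x s - 1)))"
  have nn: "\<And>s. 0 \<le> ?t s" using assms phi_bounds pr_pos by (intro mult_nonneg_nonneg add_nonneg_nonneg) (auto simp: less_imp_le)
  have "?t s \<le> step pr phi f x" unfolding step_def
    by (rule member_le_sum) (use nn in auto)
  moreover have "pr s * phi x s * f (x(s:=x s+1)) \<le> ?t s"
    "pr s * (1 - phi x s) * f (x(s:=x s-1)) \<le> ?t s"
  proof -
    have "0 \<le> phi x s * f (x(s := x s + 1))" "0 \<le> (1 - phi x s) * f (x(s := x s - 1))"
      using assms[of s] phi_bounds[of x s] by auto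
    then show "pr s * phi x s * f (x(s:=x s+1)) \<le> ?t s"
    "pr s * (1 - phi x s) * f (x(s:=x s-1)) \<le> ?t s"
      using pr_pos[of s] by (auto simp: mult.assoc intro!: mult_left_mono)
  qed
  ultimately show "pr s * phi x s * f (x(s:=x s+1)) \<le> step pr phi f x"
    "pr s * (1 - phi x s) * f (x(s:=x s-1)) \<le> step pr phi f x" by linarith+
qed


definition Q :: "state \<Rightarrow> (state \<Rightarrow> real) \<Rightarrow> state \<Rightarrow> real" where
  "Q y f z = step pr phi (\<lambda>w. if w = y then 0 else f w) z"

lemma Q_lin: "Q y (\<lambda>w. f w + b * g w) z = Q y f z + b * Q y g z"
proof -
  have "(\<lambda>w. if w = y then 0 else f w + b * g w) = (\<lambda>w. (if w = y then 0 else f w) + b * (if w = y then 0 else g w))"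
    by auto
  then show ?thesis unfolding Q_def by (simp add: step_lin)
qed

lemma Q_mono: "(\<And>w. f w \<le> g w) \<Longrightarrow> Q y f z \<le> Q y g z"
  unfolding Q_def by (rule step_mono) auto

lemma Q_le_const: "(\<And>w. f w \<le> c) \<Longrightarrow> 0 \<le> c \<Longrightarrow> Q y f z \<le> c"
proof -
  assume a: "\<And>w. f w \<le> c" "0 \<le> c"
  have "Q y f z \<le> step pr phi (\<lambda>_. c) z" unfolding Q_def by (rule step_mono) (use a in auto)
  then show ?thesis by (simp add: step_const)
qed

lemma Q_nonneg: "(\<And>w. 0 \<le> f w) \<Longrightarrow> 0 \<le> Q y f z"
proof -
  assume a: "\<And>w. 0 \<le> f w"
  have "step pr phi (\<lambda>_. 0) z \<le> Q y f z" unfolding Q_def by (rule step_mono) (use a in auto)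
  then show ?thesis by (simp add: step_const)
qed

lemma Qm_lin: "(Q y ^^ m) (\<lambda>w. f w + b * g w) z = (Q y ^^ m) f z + b * (Q y ^^ m) g z"
proof (induction m arbitrary: z)
  case 0 then show ?case by simp
next
  case (Suc m)
  have "(Q y ^^ m) (\<lambda>w. f w + b * g w) = (\<lambda>z. (Q y ^^ m) f z + b * (Q y ^^ m) g z)"
    using Suc by auto
  then show ?case by (simp add: Q_lin)
qed

lemma Qm_mono: "(\<And>w. f w \<le> g w) \<Longrightarrow> (Q y ^^ m) f z \<le> (Q y ^^ m) g z"
proof (induction m arbitrary: z)
  case 0 then show ?case by simp
next
  case (Suc m) then show ?case by (simp add: Q_mono)
qed

lemma Qm_nonneg: "(\<And>w. 0 \<le> f w) \<Longrightarrow> 0 \<le> (Q y ^^ m) f z"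
proof (induction m arbitrary: z)
  case 0 then show ?case by simp
next
  case (Suc m) then show ?case by (simp add: Q_nonneg)
qed

lemma Qm_le_const: "(\<And>w. f w \<le> c) \<Longrightarrow> 0 \<le> c \<Longrightarrow> (Q y ^^ m) f z \<le> c"
proof (induction m arbitrary: z)
  case 0 then show ?case by simp
next
  case (Suc m) then show ?case by (simp add: Q_le_const)
qed

lemma Q_sum: "Q y (\<lambda>w. \<Sum>n<(N::nat). F n w) z = (\<Sum>n<N. Q y (F n) z)"
proof (induction N arbitrary: z)
  case 0
  have "Q y (\<lambda>w. 0) z = 0" unfolding Q_def using step_const[of 0 z] by simp
  then show ?case by simp
next
  case (Suc N)
  have "Q y (\<lambda>w. \<Sum>n<Suc N. F n w) z = Q y (\<lambda>w. (\<Sum>n<N. F n w) + 1 * F N w) z" by simp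
  also have "\<dots> = Q y (\<lambda>w. \<Sum>n<N. F n w) z + 1 * Q y (F N) z" by (rule Q_lin)
  finally show ?case using Suc by simp
qed

definition T :: "state \<Rightarrow> nat \<Rightarrow> state \<Rightarrow> real" where
  "T y n = (Q y ^^ n) (\<lambda>_. 1)"

lemma T_0: "T y 0 z = 1" by (simp add: T_def)
lemma T_Suc: "T y (Suc n) = Q y (T y n)" by (simp add: T_def)
lemma T_nonneg: "0 \<le> T y n z" unfolding T_def by (rule Qm_nonneg) simp
lemma T_le1: "T y n z \<le> 1" unfolding T_def by (rule Qm_le_const) auto

lemma fp_T: "fp pr phi (Suc n) z y = T y n z - T y (Suc n) z"
proof (induction n arbitrary: z)
  case 0
  have "fp pr phi (Suc 0) z y = step pr phi (\<lambda>w. if w = y then 1 else 0) z"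
    by (simp add: fp.simps(1) cong: if_cong)
  moreover have "step pr phi (\<lambda>w. if w = y then 1 else 0) z + 1 * Q y (\<lambda>_. 1) z = 1"
    unfolding Q_def
    by (subst step_lin[symmetric]) (simp add: step_const[of 1, simplified] if_distrib cong: if_cong)
  ultimately show ?case by (simp add: T_def)
next
  case (Suc n)
  have "fp pr phi (Suc (Suc n)) z y = step pr phi (\<lambda>w. if w = y then 0 else fp pr phi (Suc n) w y) z" by simp
  also have "\<dots> = Q y (\<lambda>w. T y n w + (-1) * T y (Suc n) w) z"
  proof -
    have e: "\<And>w. fp pr phi (Suc n) w y = T y n w - T y (Suc n) w" by (rule Suc.IH)
    have "(\<lambda>w. if w = y then 0 else fp pr phi (Suc n) w y) = (\<lambda>w. if w = y then 0 else T y n w + (-1) * T y (Suc n) w)"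
      by (rule ext) (simp only: e, simp)
    then show ?thesis unfolding Q_def by metis
  qed
  also have "\<dots> = T y (Suc n) z - T y (Suc (Suc n)) z"
    unfolding Q_lin T_Suc[of y "Suc n"] T_Suc[of y n] by simp
  finally show ?case .
qed

lemma T_dec: "T y (Suc n) z \<le> T y n z"
proof (induction n arbitrary: z)
  case 0 then show ?case by (simp add: T_0 T_le1)
next
  case (Suc n)
  then show ?case unfolding T_Suc[of y "Suc n"] T_Suc[of y n] by (intro Q_mono) (simp add: T_Suc)
qed

definition S :: "state \<Rightarrow> nat \<Rightarrow> state \<Rightarrow> real" where
  "S y N z = (\<Sum>n<N. T y n z)"

lemma S_Suc: "S y (Suc N) z = 1 + Q y (S y N) z"
proof -
  have "S y (Suc N) z = T y 0 z + (\<Sum>n<N. T y (Suc n) z)"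
    unfolding S_def by (rule sum.lessThan_Suc_shift)
  also have "\<dots> = 1 + (\<Sum>n<N. Q y (T y n) z)" by (simp add: T_0 T_Suc)
  also have "\<dots> = 1 + Q y (S y N) z"
    unfolding S_def by (simp add: Q_sum[symmetric])
  finally show ?thesis .
qed

lemma S_shift: "S y (N + m) z \<le> real m + (Q y ^^ m) (S y N) z"
proof (induction m arbitrary: z)
  case 0 then show ?case by simp
next
  case (Suc m)
  have "S y (N + Suc m) z = 1 + Q y (S y (N + m)) z" by (simp add: S_Suc)
  also have "\<dots> \<le> 1 + Q y (\<lambda>w. (Q y ^^ m) (S y N) w + real m * 1) z"
    using Suc by (intro add_left_mono Q_mono) (simp add: algebra_simps)
  also have "\<dots> = 1 + (Q y ^^ Suc m) (S y N) z + real m * Q y (\<lambda>_. 1) z"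
    using Q_lin[of y "(Q y ^^ m) (S y N)" "real m" "\<lambda>_. 1" z] by simp
  also have "\<dots> \<le> 1 + (Q y ^^ Suc m) (S y N) z + real m * 1"
    by (intro add_left_mono mult_left_mono Q_le_const) auto
  finally show ?case by simp
qed

lemma S_le: "S y N z \<le> real N"
proof -
  have "S y N z \<le> (\<Sum>n<N. 1)" unfolding S_def by (rule sum_mono) (rule T_le1)
  then show ?thesis by simp
qed

lemma S_bound:
  assumes W0: "\<And>z. 0 \<le> W z" and Wm: "\<And>z. \<exists>m\<ge>1. real m + (Q y ^^ m) W z \<le> W z"
  shows "S y N z \<le> W z"
proof (induction N arbitrary: z rule: less_induct)
  case (less N)
  obtain m where m: "m \<ge> 1" "real m + (Q y ^^ m) W z \<le> W z" using Wm by blast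
  have Qn: "0 \<le> (Q y ^^ m) W z" by (rule Qm_nonneg) (rule W0)
  show ?case
  proof (cases "N \<le> m")
    case True
    then show ?thesis using S_le[of y N z] m Qn by linarith
  next
    case False
    define K where "K = N - m"
    have K: "N = K + m" "K < N" using m False unfolding K_def by auto
    have "S y N z \<le> real m + (Q y ^^ m) (S y K) z" using S_shift K by simp
    also have "\<dots> \<le> real m + (Q y ^^ m) W z"
      using less K by (intro add_left_mono Qm_mono) auto
    finally show ?thesis using m by linarith
  qed
qed


declare fp.simps(2)[simp del]

lemma fp_nonneg: "0 \<le> fp pr phi n z y"
proof (cases n)
  case 0 then show ?thesis by simp
next
  case (Suc m) then show ?thesis using fp_T[of m z y] T_dec[of y m z] by simp
qed

lemma fp_partial: "(\<Sum>k<Suc n. fp pr phi k z y) = 1 - T y n z"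
proof (induction n)
  case 0 then show ?case by (simp add: T_0)
next
  case (Suc n)
  have "(\<Sum>k<Suc (Suc n). fp pr phi k z y) = (\<Sum>k<Suc n. fp pr phi k z y) + fp pr phi (Suc n) z y"
    by simp
  then show ?case using Suc fp_T[of n z y] by simp
qed

lemma fp_moment: "(\<Sum>k<Suc N. real k * fp pr phi k z y) + real N * T y N z = S y N z"
proof (induction N)
  case 0 then show ?case by (simp add: S_def)
next
  case (Suc N)
  have "(\<Sum>k<Suc (Suc N). real k * fp pr phi k z y) = (\<Sum>k<Suc N. real k * fp pr phi k z y) + real (Suc N) * fp pr phi (Suc N) z y"
    by simp
  moreover have "S y (Suc N) z = S y N z + T y N z" by (simp add: S_def)
  moreover have e: "fp pr phi (Suc N) z y = T y N z - T y (Suc N) z" by (rule fp_T)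
  ultimately show ?case using Suc.IH unfolding e by (simp add: algebra_simps)
qed

lemma pos_rec_of_bound:
  assumes B: "\<And>N. S x N x \<le> B"
  shows "pos_recurrent pr phi x"
proof -
  have sT: "summable (\<lambda>n. T x n x)"
  proof (rule bounded_imp_summable)
    fix n
    have "(\<Sum>k\<le>n. T x k x) = S x (Suc n) x" unfolding S_def using lessThan_Suc_atMost by simp
    then show "(\<Sum>k\<le>n. T x k x) \<le> B" using B by simp
  qed (rule T_nonneg)
  have T0: "(\<lambda>n. T x n x) \<longlonglongrightarrow> 0" using summable_LIMSEQ_zero[OF sT] .
  have "(\<lambda>n. 1 - T x n x) \<longlonglongrightarrow> 1" using tendsto_diff[OF tendsto_const T0, of 1] by simp
  then have "(\<lambda>n. \<Sum>k<Suc n. fp pr phi k x x) \<longlonglongrightarrow> 1" by (simp only: fp_partial)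
  then have "(\<lambda>n. \<Sum>k<n. fp pr phi k x x) \<longlonglongrightarrow> 1"
    by (rule LIMSEQ_imp_Suc[where f="\<lambda>n. \<Sum>k<n. fp pr phi k x x"])
  then have s1: "(\<lambda>n. fp pr phi n x x) sums 1" unfolding sums_def .
  have s2: "summable (\<lambda>n. real n * fp pr phi n x x)"
  proof (rule bounded_imp_summable)
    fix n
    have "(\<Sum>k\<le>n. real k * fp pr phi k x x) = (\<Sum>k<Suc n. real k * fp pr phi k x x)"
      using lessThan_Suc_atMost by simp
    also have "\<dots> \<le> S x n x"
    proof -
      have "0 \<le> real n * T x n x" using T_nonneg[of x n x] by simp
      then show ?thesis using fp_moment[where N=n and z=x and y=x] by linarith
    qed
    finally show "(\<Sum>k\<le>n. real k * fp pr phi k x x) \<le> B" using B[of n] by simp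
  qed (simp add: fp_nonneg)
  show ?thesis unfolding pos_recurrent_def using s1 s2 by (simp add: sums_iff)
qed


lemma sum4: "(\<Sum>s\<in>(UNIV::stratum set). f s) = f (False,False) + f (False,True) + f (True,False) + f (True,True)"
proof -
  have u: "(UNIV::stratum set) = {(False,False), (False,True), (True,False), (True,True)}" by auto
  show ?thesis by (subst u) (simp add: add.assoc)
qed

definition L :: "state \<Rightarrow> stratum \<Rightarrow> real" where
  "L x s = wo * of_int (sum x UNIV) + wm1 * of_int (x (fst s, False) + x (fst s, True))
     + wm2 * of_int (x (False, snd s) + x (True, snd s)) + ws * of_int (x s)"

definition V :: "state \<Rightarrow> real" where
  "V x = wo * (of_int (sum x UNIV))^2
     + wm1 * ((of_int (x (False,False) + x (False,True)))^2 + (of_int (x (True,False) + x (True,True)))^2)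
     + wm2 * ((of_int (x (False,False) + x (True,False)))^2 + (of_int (x (False,True) + x (True,True)))^2)
     + ws * (\<Sum>s\<in>UNIV. (of_int (x s))^2)"

definition N1 :: "state \<Rightarrow> real" where
  "N1 x = (\<Sum>s\<in>UNIV. \<bar>of_int (x s)\<bar>)"

lemma imb_diff: "imb wo wm1 wm2 ws x s 1 - imb wo wm1 wm2 ws x s (-1) = 4 * L x s"
  unfolding imb_def L_def by (simp add: power2_eq_square algebra_simps)

lemma phi_eq: "phi x s = (if L x s > 0 then q else if L x s < 0 then p else 1/2)"
  using imb_diff[of x s] unfolding prob1_def by auto

lemma V_up: "V (x(s := x s + 1)) = V x + 2 * L x s + 1"
proof -
  obtain a b where s: "s = (a,b)" by (cases s)
  show ?thesis using wsum unfolding s V_def L_def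
    by (cases a; cases b) (simp_all add: sum4 power2_eq_square algebra_simps)
qed

lemma V_down: "V (x(s := x s - 1)) = V x - 2 * L x s + 1"
proof -
  obtain a b where s: "s = (a,b)" by (cases s)
  show ?thesis using wsum unfolding s V_def L_def
    by (cases a; cases b) (simp_all add: sum4 power2_eq_square algebra_simps)
qed

lemma drift_eq: "step pr phi V x = V x + 1 - 2 * (p - q) * (\<Sum>s\<in>UNIV. pr s * \<bar>L x s\<bar>)"
proof -
  have t: "pr s * (phi x s * V (x(s := x s + 1)) + (1 - phi x s) * V (x(s := x s - 1)))
      = pr s * (V x + 1) - 2 * (p - q) * (pr s * \<bar>L x s\<bar>)" for s
  proof -
    have "(2 * phi x s - 1) * L x s = - (p - q) * \<bar>L x s\<bar>"
    proof -
      have e: "p = 1 - q" using pq by simp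
      have ph: "phi x s = (if L x s > 0 then q else if L x s < 0 then p else 1/2)" by (rule phi_eq)
      show ?thesis
      proof (cases "L x s > 0")
        case True
        then have "phi x s = q" using ph by simp
        then have "2 * phi x s - 1 = - (p - q)" using pq by simp
        then show ?thesis using True by simp
      next
        case False
        show ?thesis
        proof (cases "L x s < 0")
          case True
          then have "phi x s = p" using ph False by simp
          then have "2 * phi x s - 1 = (p - q)" using pq by simp
          then have "(2 * phi x s - 1) * L x s = (p - q) * L x s" by simp
          moreover have "- (p - q) * \<bar>L x s\<bar> = (p - q) * L x s" using True by (simp add: algebra_simps)
          ultimately show ?thesis by linarith
        next
          case False2: False
          then have "L x s = 0" using False by simp
          then show ?thesis by simp
        qed
      qed
    qed
    then have "phi x s * V (x(s := x s + 1)) + (1 - phi x s) * V (x(s := x s - 1))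
        = V x + 1 - 2 * (p - q) * \<bar>L x s\<bar>"
      unfolding V_up V_down by (simp add: algebra_simps)
    then have "pr s * (phi x s * V (x(s := x s + 1)) + (1 - phi x s) * V (x(s := x s - 1)))
        = pr s * (V x + 1 - 2 * (p - q) * \<bar>L x s\<bar>)" by (rule arg_cong)
    also have "\<dots> = pr s * (V x + 1) - 2 * (p - q) * (pr s * \<bar>L x s\<bar>)" by (simp add: algebra_simps)
    finally show ?thesis .
  qed
  have "step pr phi V x = (\<Sum>s\<in>UNIV. pr s * (V x + 1) - 2 * (p - q) * (pr s * \<bar>L x s\<bar>))"
    unfolding step_def using t by simp
  also have "\<dots> = V x + 1 - 2 * (p - q) * (\<Sum>s\<in>UNIV. pr s * \<bar>L x s\<bar>)"
    by (simp add: sum_subtractf sum_distrib_left[symmetric] sum_distrib_right[symmetric] pr_sum)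
  finally show ?thesis .
qed

lemma V_nonneg: "0 \<le> V x"
  unfolding V_def using w0 w1 w2 w3 by (intro add_nonneg_nonneg mult_nonneg_nonneg sum_nonneg) auto

lemma V_Lsum: "V x = (\<Sum>s\<in>UNIV. of_int (x s) * L x s)"
  unfolding V_def L_def by (simp add: sum4 power2_eq_square algebra_simps)


lemma sq4: "((u::real) + v + w + t)^2 \<le> 4 * (u^2 + v^2 + w^2 + t^2)"
proof -
  have "0 \<le> (u-v)^2 + (u-w)^2 + (u-t)^2 + (v-w)^2 + (v-t)^2 + (w-t)^2" by simp
  then show ?thesis by (simp add: power2_eq_square algebra_simps)
qed

lemma sumL_lb: "ws * N1 x \<le> 4 * (\<Sum>s\<in>UNIV. \<bar>L x s\<bar>)"
proof -
  let ?a = "\<lambda>s. real_of_int (x s)"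
  have A: "N1 x ^2 \<le> 4 * (\<Sum>s\<in>UNIV. (?a s)^2)"
    using sq4[of "\<bar>?a (False,False)\<bar>" "\<bar>?a (False,True)\<bar>" "\<bar>?a (True,False)\<bar>" "\<bar>?a (True,True)\<bar>"]
    unfolding N1_def sum4 by simp
  have B: "ws * (\<Sum>s\<in>UNIV. (?a s)^2) \<le> V x"
  proof -
    have "0 \<le> wo * (of_int (sum x UNIV))^2
     + wm1 * ((of_int (x (False,False) + x (False,True)))^2 + (of_int (x (True,False) + x (True,True)))^2)
     + wm2 * ((of_int (x (False,False) + x (True,False)))^2 + (of_int (x (False,True) + x (True,True)))^2)"
      using w0 w1 w2 by (intro add_nonneg_nonneg mult_nonneg_nonneg) auto
    then show ?thesis unfolding V_def by linarith
  qed
  have C: "V x \<le> N1 x * (\<Sum>s\<in>UNIV. \<bar>L x s\<bar>)"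
  proof -
    have "V x \<le> (\<Sum>s\<in>UNIV. \<bar>?a s\<bar> * \<bar>L x s\<bar>)"
      unfolding V_Lsum by (rule sum_mono) (simp add: abs_mult[symmetric])
    also have "\<dots> \<le> (\<Sum>s\<in>UNIV. N1 x * \<bar>L x s\<bar>)"
    proof (rule sum_mono)
      fix s
      have "\<bar>?a s\<bar> \<le> N1 x" unfolding N1_def by (rule member_le_sum) auto
      then show "\<bar>?a s\<bar> * \<bar>L x s\<bar> \<le> N1 x * \<bar>L x s\<bar>" by (rule mult_right_mono) simp
    qed
    finally show ?thesis by (simp add: sum_distrib_left)
  qed
  have N0: "0 \<le> N1 x" unfolding N1_def by (rule sum_nonneg) simp
  have "ws * N1 x * N1 x \<le> 4 * (\<Sum>s\<in>UNIV. \<bar>L x s\<bar>) * N1 x"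
  proof -
    have "ws * N1 x ^2 \<le> 4 * (ws * (\<Sum>s\<in>UNIV. (?a s)^2))"
      using mult_left_mono[OF A w3] by (simp add: algebra_simps)
    also have "\<dots> \<le> 4 * (N1 x * (\<Sum>s\<in>UNIV. \<bar>L x s\<bar>))" using B C by simp
    finally show ?thesis by (simp add: power2_eq_square algebra_simps)
  qed
  then show ?thesis
  proof (cases "N1 x = 0")
    case True
    have "0 \<le> (\<Sum>s\<in>UNIV. \<bar>L x s\<bar>)" by (rule sum_nonneg) simp
    then show ?thesis using True by simp
  next
    case False
    then have "N1 x > 0" using N0 by simp
    then show ?thesis using \<open>ws * N1 x * N1 x \<le> _\<close> by (simp add: mult_le_cancel_right)
  qed
qed

definition pm :: real where "pm = Min (range pr)"

lemma pm_le: "pm \<le> pr s" unfolding pm_def by (rule Min_le) auto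

lemma pm_pos: "0 < pm"
proof -
  have "pm \<in> range pr" unfolding pm_def by (rule Min_in) auto
  then show ?thesis using pr_pos by auto
qed

definition R0 :: real where "R0 = 4 / ((p - q) * pm * ws)"

lemma drift:
  assumes wsp: "ws > 0" and big: "R0 \<le> N1 x"
  shows "step pr phi V x \<le> V x - 1"
proof -
  let ?K = "\<Sum>s\<in>UNIV. pr s * \<bar>L x s\<bar>"
  have pqp: "0 < p - q" using qp by simp
  have "pm * (\<Sum>s\<in>UNIV. \<bar>L x s\<bar>) \<le> ?K"
    unfolding sum_distrib_left by (rule sum_mono) (intro mult_right_mono pm_le, simp)
  moreover have "pm * (ws * N1 x) \<le> pm * (4 * (\<Sum>s\<in>UNIV. \<bar>L x s\<bar>))"
    using sumL_lb pm_pos by (intro mult_left_mono) auto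
  ultimately have K1: "pm * ws * N1 x \<le> 4 * ?K" by (simp add: algebra_simps)
  have "pm * ws * R0 \<le> pm * ws * N1 x" using big pm_pos wsp by (intro mult_left_mono) auto
  moreover have "pm * ws * R0 = 4 / (p - q)" unfolding R0_def using pm_pos wsp pqp by (simp add: field_simps)
  ultimately have "4 / (p - q) \<le> 4 * ?K" using K1 by linarith
  then have "1 / (p - q) \<le> ?K" by simp
  then have "1 \<le> (p - q) * ?K" using pqp by (simp add: field_simps)
  then have "2 \<le> 2 * ((p - q) * ?K)" by linarith
  then have "2 \<le> 2 * (p - q) * ?K" by (simp only: mult.assoc)
  then show ?thesis unfolding drift_eq by linarith
qed

lemma abs4: "\<bar>(a::real)+b+c+d\<bar> \<le> \<bar>a\<bar>+\<bar>b\<bar>+\<bar>c\<bar>+\<bar>d\<bar>"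
proof -
  have "\<bar>a+b+c+d\<bar> \<le> \<bar>a+b+c\<bar> + \<bar>d\<bar>" by (rule abs_triangle_ineq)
  moreover have "\<bar>a+b+c\<bar> \<le> \<bar>a+b\<bar> + \<bar>c\<bar>" by (rule abs_triangle_ineq)
  moreover have "\<bar>a+b\<bar> \<le> \<bar>a\<bar> + \<bar>b\<bar>" by (rule abs_triangle_ineq)
  ultimately show ?thesis by linarith
qed

lemma abs22: "\<bar>(a::real)+b\<bar> + \<bar>c+d\<bar> \<le> \<bar>a\<bar>+\<bar>b\<bar>+\<bar>c\<bar>+\<bar>d\<bar>"
  using abs_triangle_ineq[of a b] abs_triangle_ineq[of c d] by linarith

lemma V_le: "V x \<le> N1 x ^ 2"
proof -
  let ?a = "\<lambda>s. real_of_int (x s)"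
  have N0: "0 \<le> N1 x" unfolding N1_def by (rule sum_nonneg) simp
  have nsq: "u^2 \<le> N1 x ^ 2" if "\<bar>u\<bar> \<le> N1 x" for u :: real
    using that power_mono[of "\<bar>u\<bar>" "N1 x" 2] by simp
  have nsq2: "u^2 + v^2 \<le> N1 x ^ 2" if "\<bar>u\<bar> + \<bar>v\<bar> \<le> N1 x" for u v :: real
  proof -
    have "u^2 + v^2 \<le> (\<bar>u\<bar> + \<bar>v\<bar>)^2" by (simp add: power2_eq_square algebra_simps)
    also have "\<dots> \<le> N1 x ^ 2" using that power_mono[of "\<bar>u\<bar> + \<bar>v\<bar>" "N1 x" 2] by simp
    finally show ?thesis .
  qed
  have NN: "N1 x = \<bar>?a (False,False)\<bar> + \<bar>?a (False,True)\<bar> + \<bar>?a (True,False)\<bar> + \<bar>?a (True,True)\<bar>"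
    unfolding N1_def sum4 ..
  have g1: "(of_int (sum x UNIV))^2 \<le> N1 x ^ 2" unfolding sum4 by (rule nsq) (unfold NN of_int_add, rule abs4)
  have g2: "(of_int (x (False,False) + x (False,True)))^2 + (of_int (x (True,False) + x (True,True)))^2 \<le> N1 x ^ 2"
    by (rule nsq2) (unfold NN of_int_add, rule abs22)
  have g3: "(of_int (x (False,False) + x (True,False)))^2 + (of_int (x (False,True) + x (True,True)))^2 \<le> N1 x ^ 2"
    by (rule nsq2) (unfold NN of_int_add, use abs22[of "?a (False,False)" "?a (True,False)" "?a (False,True)" "?a (True,True)"] in linarith)
  have g4: "(\<Sum>s\<in>UNIV. (?a s)^2) \<le> N1 x ^ 2"
  proof -
    have "(\<Sum>s\<in>UNIV. (?a s)^2) \<le> (\<Sum>s\<in>UNIV. \<bar>?a s\<bar>)^2"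
      unfolding sum4 by (simp add: power2_eq_square algebra_simps)
    then show ?thesis unfolding N1_def .
  qed
  have "V x \<le> wo * N1 x ^ 2 + wm1 * N1 x ^ 2 + wm2 * N1 x ^ 2 + ws * N1 x ^ 2"
    unfolding V_def using w0 w1 w2 w3 g1 g2 g3 g4
    by (intro add_mono mult_left_mono) auto
  also have "\<dots> = N1 x ^ 2" using wsum by (simp add: algebra_simps flip: distrib_right)
  finally show ?thesis .
qed

lemma N1_up: "N1 (x(s := x s + 1)) \<le> N1 x + 1"
proof -
  obtain a b where s: "s = (a,b)" by (cases s)
  show ?thesis unfolding s N1_def sum4 by (cases a; cases b) auto
qed

lemma N1_down: "N1 (x(s := x s - 1)) \<le> N1 x + 1"
proof -
  obtain a b where s: "s = (a,b)" by (cases s)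
  show ?thesis unfolding s N1_def sum4 by (cases a; cases b) auto
qed


definition D1 :: "state \<Rightarrow> state \<Rightarrow> int" where
  "D1 z y = (\<Sum>s\<in>UNIV. \<bar>z s - y s\<bar>)"

lemma D1_upd: "D1 (z(s := v)) y = D1 z y - \<bar>z s - y s\<bar> + \<bar>v - y s\<bar>"
proof -
  obtain a b where s: "s = (a,b)" by (cases s)
  show ?thesis unfolding s D1_def sum4 by (cases a; cases b) auto
qed

lemma D1_nonneg: "0 \<le> D1 z y" unfolding D1_def by (rule sum_nonneg) simp

lemma D1_zero: "D1 z y = 0 \<longleftrightarrow> z = y"
proof
  assume "D1 z y = 0"
  then have "\<forall>s\<in>UNIV. \<bar>z s - y s\<bar> = 0" unfolding D1_def by (subst sum_nonneg_eq_0_iff[symmetric]) auto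
  then show "z = y" by auto
qed (simp add: D1_def)

lemma D1_le: "real_of_int (D1 z y) \<le> N1 z + N1 y"
proof -
  have "real_of_int (D1 z y) = (\<Sum>s\<in>UNIV. \<bar>real_of_int (z s) - real_of_int (y s)\<bar>)" unfolding D1_def by simp
  also have "\<dots> \<le> (\<Sum>s\<in>UNIV. \<bar>real_of_int (z s)\<bar> + \<bar>real_of_int (y s)\<bar>)"
    by (rule sum_mono) (rule abs_triangle_ineq4)
  finally show ?thesis unfolding N1_def by (simp add: sum.distrib)
qed

lemma D1_neighbor:
  assumes "z \<noteq> y"
  shows "\<exists>s w. (w = z(s := z s + 1) \<or> w = z(s := z s - 1)) \<and> D1 w y = D1 z y - 1"
proof -
  obtain s where s: "z s \<noteq> y s" using assms by (meson ext)
  show ?thesis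
  proof (cases "z s > y s")
    case True
    then show ?thesis by (intro exI[of _ s] exI[of _ "z(s := z s - 1)"]) (simp add: D1_upd)
  next
    case False
    then show ?thesis using s by (intro exI[of _ s] exI[of _ "z(s := z s + 1)"]) (simp add: D1_upd)
  qed
qed

definition c0 :: real where "c0 = pm * q"

lemma pr_le1: "pr s \<le> 1"
proof -
  have "pr s \<le> (\<Sum>t\<in>UNIV. pr t)" by (rule member_le_sum) (use pr_pos in \<open>auto simp: less_imp_le\<close>)
  then show ?thesis using pr_sum by simp
qed

lemma c0_pos: "0 < c0" unfolding c0_def using pm_pos q_pos by simp
lemma c0_le1: "c0 \<le> 1"
proof -
  have "pm \<le> 1" using pm_le[of s] pr_le1[of s] by simp
  then show ?thesis unfolding c0_def using pm_pos q_pos qp p1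
    by (metis less_eq_real_def mult_le_one order.strict_trans)
qed

lemma Q_good:
  assumes f1: "\<And>w. f w \<le> 1" and w0: "w0 = z(s := z s + 1) \<or> w0 = z(s := z s - 1)"
    and d: "(if w0 = y then 0 else f w0) \<le> 1 - \<delta>" and d0: "0 \<le> \<delta>"
  shows "Q y f z \<le> 1 - c0 * \<delta>"
proof -
  let ?g = "\<lambda>w. if w = y then 0 else f w"
  have g1: "\<And>w. ?g w \<le> 1" using f1 by auto
  have lin: "step pr phi (\<lambda>w. 1 + (-1) * ?g w) z = 1 - Q y f z"
    unfolding step_lin step_const Q_def by simp
  have nn: "\<And>w. 0 \<le> 1 + (-1) * ?g w" using g1 by (simp add: algebra_simps)
  have pq0: "c0 \<le> pr s * phi z s" "c0 \<le> pr s * (1 - phi z s)"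
    unfolding c0_def using pm_le[of s] phi_bounds[of z s] pm_pos q_pos
    by (auto intro!: mult_mono)
  have "c0 * \<delta> \<le> step pr phi (\<lambda>w. 1 + (-1) * ?g w) z"
    using w0
  proof
    assume w: "w0 = z(s := z s + 1)"
    have "c0 * \<delta> \<le> pr s * phi z s * (1 + (-1) * ?g w0)"
      using d d0 pq0 c0_pos phi_bounds[of z s] by (intro mult_mono) (auto simp: w algebra_simps)
    also have "\<dots> \<le> step pr phi (\<lambda>w. 1 + (-1) * ?g w) z" unfolding w
      by (rule step_ge(1)) (use nn in auto)
    finally show ?thesis .
  next
    assume w: "w0 = z(s := z s - 1)"
    have "c0 * \<delta> \<le> pr s * (1 - phi z s) * (1 + (-1) * ?g w0)"
      using d d0 pq0 c0_pos phi_bounds[of z s] by (intro mult_mono) (auto simp: w algebra_simps)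
    also have "\<dots> \<le> step pr phi (\<lambda>w. 1 + (-1) * ?g w) z" unfolding w
      by (rule step_ge(2)) (use nn in auto)
    finally show ?thesis .
  qed
  then show ?thesis using lin by simp
qed

lemma Q_le_nb:
  assumes "\<And>s. (if z(s := z s + 1) = y then 0 else f (z(s := z s + 1))) \<le> K"
    "\<And>s. (if z(s := z s - 1) = y then 0 else f (z(s := z s - 1))) \<le> K"
  shows "Q y f z \<le> K"
proof -
  have "Q y f z \<le> step pr phi (\<lambda>_. K) z" unfolding Q_def
    by (rule step_mono) (use assms in auto)
  then show ?thesis by (simp add: step_const)
qed

lemma Qm1_le1: "(Q y ^^ n) (\<lambda>_. 1) w \<le> 1" by (rule Qm_le_const) auto

lemma hit: "D1 z y = int (Suc n) \<Longrightarrow> (Q y ^^ Suc n) (\<lambda>_. 1) z \<le> 1 - c0 ^ Suc n"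
proof (induction n arbitrary: z)
  case 0
  have zy: "z \<noteq> y"
  proof
    assume "z = y" then have "D1 z y = 0" by (simp add: D1_zero)
    with 0 show False by simp
  qed
  obtain s w where w: "w = z(s := z s + 1) \<or> w = z(s := z s - 1)" "D1 w y = D1 z y - 1"
    using D1_neighbor[OF zy] by blast
  then have "w = y" using 0 D1_zero by simp
  have "Q y (\<lambda>_. 1) z \<le> 1 - c0 * 1"
    by (rule Q_good[OF _ w(1)]) (auto simp: \<open>w = y\<close>)
  then show ?case by simp
next
  case (Suc n)
  have zy: "z \<noteq> y"
  proof
    assume "z = y" then have "D1 z y = 0" by (simp add: D1_zero)
    with Suc.prems show False by simp
  qed
  obtain s w where w: "w = z(s := z s + 1) \<or> w = z(s := z s - 1)" "D1 w y = D1 z y - 1"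
    using D1_neighbor[OF zy] by blast
  then have Dw: "D1 w y = int (Suc n)" using Suc.prems by simp
  have wy: "w \<noteq> y"
  proof
    assume "w = y" then have "D1 w y = 0" by (simp add: D1_zero)
    with Dw show False by simp
  qed
  have "Q y ((Q y ^^ Suc n) (\<lambda>_. 1)) z \<le> 1 - c0 * c0 ^ Suc n"
    by (rule Q_good[OF Qm1_le1 w(1)]) (use Suc.IH[OF Dw] wy c0_pos in auto)
  then show ?case by simp
qed

lemma ret: "(Q y ^^ 2) (\<lambda>_. 1) y \<le> 1 - c0 ^ 2"
proof -
  let ?s = "(False,False)"
  let ?w = "y(?s := y ?s + 1)"
  have wy: "?w \<noteq> y" by (metis fun_upd_same less_add_one order_less_irrefl)
  have Dw: "D1 ?w y = int (Suc 0)" unfolding D1_upd by (simp add: D1_zero)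
  have h: "(Q y ^^ Suc 0) (\<lambda>_. 1) ?w \<le> 1 - c0 ^ Suc 0" by (rule hit[OF Dw])
  have "Q y ((Q y ^^ Suc 0) (\<lambda>_. 1)) y \<le> 1 - c0 * c0"
    by (rule Q_good[OF Qm1_le1, of ?w y ?s]) (use h wy c0_pos in auto)
  then show ?thesis by (simp add: power2_eq_square numeral_2_eq_2)
qed

lemma N1_nonneg: "0 \<le> N1 x" unfolding N1_def by (rule sum_nonneg) simp

lemma QmV: "(Q y ^^ j) V z \<le> (N1 z + real j)^2"
proof (induction j arbitrary: z)
  case 0 then show ?case using V_le by simp
next
  case (Suc j)
  let ?K = "(N1 z + real (Suc j))^2"
  have a: "(Q y ^^ j) V w \<le> ?K" if "N1 w \<le> N1 z + 1" for w
  proof -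
    have "(Q y ^^ j) V w \<le> (N1 w + real j)^2" by (rule Suc.IH)
    also have "\<dots> \<le> ?K" using that N1_nonneg[of w] by (intro power_mono) auto
    finally show ?thesis .
  qed
  have K0: "0 \<le> ?K" by simp
  have "Q y ((Q y ^^ j) V) z \<le> ?K"
    by (rule Q_le_nb) (use a N1_up N1_down K0 in auto)
  then show ?case by simp
qed


lemma pos_rec:
  assumes wsp: "ws > 0"
  shows "pos_recurrent pr phi y"
proof -
  define M :: nat where "M = nat \<lceil>R0\<rceil> + nat \<lceil>N1 y\<rceil> + 2"
  define \<beta> where "\<beta> = ((R0 + real M)^2 + real M) / c0 ^ M"
  define W where "W z = V z + \<beta>" for z
  have R0p: "0 < R0" unfolding R0_def using pm_pos wsp qp by simp
  have cM: "0 < c0 ^ M" using c0_pos by simp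
  have b0: "0 \<le> \<beta>" unfolding \<beta>_def using cM by simp
  have bc: "\<beta> * c0 ^ M = (R0 + real M)^2 + real M" unfolding \<beta>_def using cM c0_pos by simp
  have W0: "0 \<le> W z" for z unfolding W_def using V_nonneg[of z] b0 by simp
  have Wm: "\<exists>m\<ge>1. real m + (Q y ^^ m) W z \<le> W z" for z
  proof (cases "R0 \<le> N1 z")
    case True
    have "Q y W z \<le> step pr phi (\<lambda>w. V w + \<beta> * 1) z" unfolding Q_def W_def
      by (rule step_mono) (use W0 in \<open>auto simp: W_def\<close>)
    also have "\<dots> = step pr phi V z + \<beta>" by (simp only: step_lin step_const)
    also have "\<dots> \<le> V z - 1 + \<beta>" using drift[OF wsp True] by simp
    finally have "1 + (Q y ^^ 1) W z \<le> W z" unfolding W_def by simp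
    then show ?thesis by (intro exI[of _ 1]) simp
  next
    case False
    define m where "m = (if z = y then 2 else nat (D1 z y))"
    have m1: "1 \<le> m"
    proof (cases "z = y")
      case False
      then have "D1 z y \<noteq> 0" using D1_zero by simp
      then show ?thesis using D1_nonneg[of z y] False unfolding m_def by simp
    qed (simp add: m_def)
    have mM: "m \<le> M"
    proof (cases "z = y")
      case False
      have "real_of_int (D1 z y) \<le> N1 z + N1 y" by (rule D1_le)
      also have "\<dots> < R0 + N1 y" using \<open>\<not> R0 \<le> N1 z\<close> by simp
      also have "\<dots> \<le> real (nat \<lceil>R0\<rceil>) + real (nat \<lceil>N1 y\<rceil>)"
        using R0p N1_nonneg[of y] by (intro add_mono) (simp_all add: real_nat_ceiling_ge)
      finally have "D1 z y < int (nat \<lceil>R0\<rceil> + nat \<lceil>N1 y\<rceil>)" by linarith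
      then have "nat (D1 z y) < nat \<lceil>R0\<rceil> + nat \<lceil>N1 y\<rceil>"
        using nat_less_iff[OF D1_nonneg[of z y]] by blast
      then show ?thesis using False unfolding m_def M_def by simp
    qed (simp add: m_def M_def)
    have hitm: "(Q y ^^ m) (\<lambda>_. 1) z \<le> 1 - c0 ^ m"
    proof (cases "z = y")
      case True then show ?thesis using ret unfolding m_def by simp
    next
      case False
      then obtain k where k: "m = Suc k" using m1 by (cases m) auto
      have "D1 z y = int (Suc k)" using k False D1_nonneg[of z y] unfolding m_def by simp
      then show ?thesis using hit k by simp
    qed
    have cmM: "c0 ^ M \<le> c0 ^ m" using mM c0_pos c0_le1 by (intro power_decreasing) auto
    have Vb: "(Q y ^^ m) V z \<le> (R0 + real M)^2"
    proof -
      have "(Q y ^^ m) V z \<le> (N1 z + real m)^2" by (rule QmV)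
      also have "\<dots> \<le> (R0 + real M)^2" using False mM N1_nonneg[of z] by (intro power_mono) auto
      finally show ?thesis .
    qed
    have "(Q y ^^ m) W z = (Q y ^^ m) V z + \<beta> * (Q y ^^ m) (\<lambda>_. 1) z"
      unfolding W_def using Qm_lin[where y=y and m=m and f=V and b=\<beta> and g="\<lambda>_. 1" and z=z] by simp
    also have "\<dots> \<le> (R0 + real M)^2 + \<beta> * (1 - c0 ^ M)"
      using Vb hitm cmM b0 by (intro add_mono mult_left_mono) auto
    also have "\<dots> = \<beta> - real M" using bc by (simp add: algebra_simps)
    finally have "real m + (Q y ^^ m) W z \<le> W z"
      using mM V_nonneg[of z] unfolding W_def by linarith
    then show ?thesis using m1 by blast
  qed
  show ?thesis
    by (rule pos_rec_of_bound[of y "W y"]) (rule S_bound[OF W0 Wm])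
qed


lemma Pn_nonneg: "0 \<le> Pn pr phi n x y"
proof (induction n arbitrary: x)
  case 0 then show ?case by simp
next
  case (Suc n)
  have "step pr phi (\<lambda>_. 0) x \<le> step pr phi (\<lambda>z. Pn pr phi n z y) x"
    by (rule step_mono) (use Suc in auto)
  then show ?case by (simp add: step_const)
qed

lemma sum_upd_int: "sum ((x::state)(s := v)) UNIV = sum x UNIV - x s + v"
proof -
  obtain a b where s: "s = (a,b)" by (cases s)
  show ?thesis unfolding s sum4 by (cases a; cases b) auto
qed

lemma Pn_parity: "Pn pr phi n x y \<noteq> 0 \<Longrightarrow> even (int n + sum x UNIV - sum y UNIV)"
proof (induction n arbitrary: x)
  case 0 then show ?case by (simp split: if_splits)
next
  case (Suc n)
  have "step pr phi (\<lambda>z. Pn pr phi n z y) x \<noteq> 0" using Suc.prems by simp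
  then obtain s where "pr s * (phi x s * Pn pr phi n (x(s := x s + 1)) y + (1 - phi x s) * Pn pr phi n (x(s := x s - 1)) y) \<noteq> 0"
    unfolding step_def by (meson sum.neutral)
  then have "Pn pr phi n (x(s := x s + 1)) y \<noteq> 0 \<or> Pn pr phi n (x(s := x s - 1)) y \<noteq> 0" by auto
  then show ?case
  proof
    assume "Pn pr phi n (x(s := x s + 1)) y \<noteq> 0"
    from Suc.IH[OF this] have "even (int n + (sum x UNIV - x s + (x s + 1)) - sum y UNIV)"
      unfolding sum_upd_int .
    moreover have "int n + (sum x UNIV - x s + (x s + 1)) - sum y UNIV = int (Suc n) + sum x UNIV - sum y UNIV" by simp
    ultimately show ?case by metis
  next
    assume "Pn pr phi n (x(s := x s - 1)) y \<noteq> 0"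
    from Suc.IH[OF this] have "even (int n + (sum x UNIV - x s + (x s - 1)) - sum y UNIV)"
      unfolding sum_upd_int .
    moreover have "int (Suc n) + sum x UNIV - sum y UNIV = (int n + (sum x UNIV - x s + (x s - 1)) - sum y UNIV) + 2" by simp
    ultimately show ?case by (metis dvd_add dvd_refl)
  qed
qed

lemma Pn2: "0 < Pn pr phi 2 x x"
proof -
  define s0 :: stratum where "s0 = (False,False)"
  define u where "u = x(s0 := x s0 + 1)"
  have bk: "u(s0 := u s0 - 1) = x" unfolding u_def by auto
  have "pr s0 * (1 - phi u s0) * Pn pr phi 0 (u(s0 := u s0 - 1)) x \<le> step pr phi (\<lambda>z. Pn pr phi 0 z x) u"
    by (rule step_ge(2)) (rule Pn_nonneg)+
  then have p1: "pr s0 * (1 - phi u s0) \<le> Pn pr phi 1 u x" unfolding bk by simp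
  have "pr s0 * phi x s0 * Pn pr phi 1 (x(s0 := x s0 + 1)) x \<le> step pr phi (\<lambda>z. Pn pr phi 1 z x) x"
    by (rule step_ge(1)) (rule Pn_nonneg)+
  then have p2: "pr s0 * phi x s0 * Pn pr phi 1 u x \<le> Pn pr phi 2 x x" unfolding u_def by (simp add: numeral_2_eq_2)
  have a: "0 < pr s0 * (1 - phi u s0)" using pr_pos phi_bounds[of u s0] q_pos by (simp add: less_le_trans)
  have b: "0 < pr s0 * phi x s0" using pr_pos phi_bounds[of x s0] q_pos by (simp add: less_le_trans)
  have "0 < pr s0 * phi x s0 * Pn pr phi 1 u x" using a b p1 by simp
  then show ?thesis using p2 by linarith
qed

lemma period2: "period pr phi x = 2"
proof -
  let ?A = "{n. 0 < n \<and> 0 < Pn pr phi n x x}"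
  have "2 \<in> ?A" using Pn2 by simp
  then have d1: "Gcd ?A dvd 2" by (rule Gcd_dvd)
  have d2: "2 dvd Gcd ?A"
  proof (rule Gcd_greatest)
    fix n assume "n \<in> ?A"
    then have "Pn pr phi n x x \<noteq> 0" by simp
    from Pn_parity[OF this] show "2 dvd n" by simp
  qed
  show ?thesis unfolding period_def using d1 d2 by (simp add: dvd_antisym)
qed

end

lemma lc_char:
  fixes a b :: real
  assumes b0: "0 \<le> b" and b1: "b < 1" and a0: "0 \<le> a" and ab: "2*a \<le> 1 + b"
  shows "(\<exists>x1 x2 x3. x1 + a*x2 + a*x3 = b \<and> a*x1 + x2 + b*x3 = a \<and> a*x1 + b*x2 + x3 = a \<and> \<bar>x1\<bar>+\<bar>x2\<bar>+\<bar>x3\<bar> < 1)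
     \<longleftrightarrow> \<bar>b + b^2 - 2*a^2\<bar> + 2*a*(1-b) < 1 + b - 2*a^2"
    (is "?L \<longleftrightarrow> \<bar>?E\<bar> + ?F < ?D")
proof -
  have "2*a^2 \<le> (1+b)^2/2"
  proof -
    have "(2*a)^2 \<le> (1+b)^2" using a0 ab by (intro power_mono) auto
    then show ?thesis by (simp add: power_mult_distrib)
  qed
  moreover have "(1+b)^2/2 < 1 + b"
  proof -
    have "b*b \<le> b" using mult_left_le[of b b] b0 b1 by simp
    then show ?thesis using b1 by (simp add: power2_eq_square field_simps)
  qed
  ultimately have Dp: "0 < ?D" by linarith
  have F0: "0 \<le> ?F" using a0 b1 by simp
  have key: "\<bar>x1\<bar> + 2*\<bar>y\<bar> < 1 \<longleftrightarrow> \<bar>?E\<bar> + ?F < ?D" if x1e: "x1 * ?D = ?E" and ye: "y * ?D = a*(1-b)" for x1 y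
  proof -
    have "\<bar>x1\<bar> * ?D = \<bar>?E\<bar>" using x1e Dp by (metis abs_mult abs_of_pos)
    moreover have "\<bar>y\<bar> * ?D = a*(1-b)" using ye Dp a0 b1
      by (metis abs_mult abs_of_pos abs_of_nonneg mult_nonneg_nonneg diff_ge_0_iff_ge less_imp_le)
    ultimately have "(\<bar>x1\<bar> + 2*\<bar>y\<bar>) * ?D = \<bar>?E\<bar> + ?F" by (simp add: algebra_simps)
    then show ?thesis using Dp by (metis mult_less_cancel_right2 mult_less_cancel_right_pos mult.commute mult_1 less_irrefl)
  qed
  show ?thesis
  proof
    assume ?L
    then obtain x1 x2 x3 where e1: "x1 + a*x2 + a*x3 = b" and e2: "a*x1 + x2 + b*x3 = a"
      and e3: "a*x1 + b*x2 + x3 = a" and s: "\<bar>x1\<bar>+\<bar>x2\<bar>+\<bar>x3\<bar> < 1" by blast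
    have "(1-b)*(x2-x3) = (a*x1 + x2 + b*x3 - a) - (a*x1 + b*x2 + x3 - a)" by algebra
    then have "(1-b)*(x2-x3) = 0" using e2 e3 by simp
    then have x23: "x3 = x2" using b1 by simp
    have x1e: "x1 = b - 2*a*x2" using e1 x23 by simp
    have e2': "a*(b - 2*a*x2) + x2 + b*x2 - a = 0" using e2 x23 x1e by simp
    have "x2 * ?D - a*(1-b) = a*(b - 2*a*x2) + x2 + b*x2 - a" by algebra
    then have ye: "x2 * ?D = a*(1-b)" using e2' by simp
    have "x1 * ?D - ?E = -2*a*(x2 * ?D - a*(1-b)) + (x1 - (b - 2*a*x2)) * ?D" by algebra
    then have xe: "x1 * ?D = ?E" using ye x1e by simp
    show "\<bar>?E\<bar> + ?F < ?D" using key[OF xe ye] s x23 by simp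
  next
    assume c: "\<bar>?E\<bar> + ?F < ?D"
    define y where "y = a*(1-b)/?D"
    define x1 where "x1 = ?E/?D"
    have ye: "y * ?D = a*(1-b)" unfolding y_def using Dp by simp
    have xe: "x1 * ?D = ?E" unfolding x1_def using Dp by simp
    have e1: "x1 + a*y + a*y = b"
    proof -
      have "(x1 + a*y + a*y) * ?D - b * ?D = (x1 * ?D - ?E) + 2*a*(y * ?D - a*(1-b))" by algebra
      then have "(x1 + a*y + a*y) * ?D = b * ?D" using ye xe by simp
      then show ?thesis using Dp by simp
    qed
    have e2: "a*x1 + y + b*y = a"
    proof -
      have "(a*x1 + y + b*y) * ?D - a * ?D = a*(x1 * ?D - ?E) + (1+b)*(y * ?D - a*(1-b))" by algebra
      then have "(a*x1 + y + b*y) * ?D = a * ?D" using ye xe by simp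
      then show ?thesis using Dp by simp
    qed
    have "\<bar>x1\<bar> + \<bar>y\<bar> + \<bar>y\<bar> < 1" using key[OF xe ye] c by simp
    then show ?L using e1 e2 by (intro exI[of _ x1] exI[of _ y]) (simp add: algebra_simps)
  qed
qed


lemma cond_equiv:
  fixes b m :: real
  assumes b0: "0 \<le> b" and b1: "b < 1" and m0: "0 \<le> m" and bm: "b + 2*m \<le> 1"
  shows "\<bar>b + b^2 - 2*(b+m)^2\<bar> + 2*(b+m)*(1-b) < 1 + b - 2*(b+m)^2 \<longleftrightarrow> m < Cfun b"
proof -
  define a where "a = b + m"
  have a0: "0 \<le> a" using b0 m0 unfolding a_def by simp
  have ab: "2*a \<le> 1 + b" using bm unfolding a_def by simp
  define E where "E = b + b^2 - 2*a^2"
  define F where "F = 2*a*(1-b)"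
  define D where "D = 1 + b - 2*a^2"
  define qa where "qa = 4*a^2 + 2*a*(1-b) - (1+b)^2"
  have i1: "E + F - D = (1-b)*(2*a - 1 - b)" unfolding E_def F_def D_def by algebra
  have i2: "-E + F - D = qa" unfolding E_def F_def D_def qa_def by algebra
  have c1: "E + F < D \<longleftrightarrow> 2*a < 1 + b"
  proof -
    have "(1-b)*(2*a - 1 - b) < 0 \<longleftrightarrow> 2*a - 1 - b < 0" using b1 by (simp add: mult_less_0_iff)
    then show ?thesis using i1 by linarith
  qed
  have c4: "qa < 0 \<Longrightarrow> 2*a < 1 + b"
  proof (rule ccontr)
    assume "qa < 0" "\<not> 2*a < 1 + b"
    then have a2: "2*a = 1 + b" using ab by simp
    have "qa = (1+b)*(1-b)" unfolding qa_def
    proof -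
      have "4*a^2 = (2*a)^2" by (simp add: power2_eq_square)
      then show "4*a^2 + 2*a*(1-b) - (1+b)^2 = (1+b)*(1-b)" unfolding a2 by (simp add: algebra_simps)
    qed
    moreover have "0 < (1+b)*(1-b)" using b0 b1 by simp
    ultimately show False using \<open>qa < 0\<close> by simp
  qed
  define X where "X = (1 - b)^2 + 4*(1 + b)^2"
  define t where "t = 4*a + 1 - b"
  have t0: "0 \<le> t" unfolding t_def using a0 b1 by simp
  have X0: "0 \<le> X" unfolding X_def by simp
  have it: "t^2 - X = 4*qa" unfolding t_def X_def qa_def by algebra
  have c3: "qa < 0 \<longleftrightarrow> t < sqrt X"
  proof
    assume "qa < 0"
    then have "t^2 < X" using it by simp
    then show "t < sqrt X" by (rule real_less_rsqrt)
  next
    assume "t < sqrt X"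
    then have "t^2 < (sqrt X)^2" using t0 by (intro power_strict_mono) auto
    then show "qa < 0" using it X0 by simp
  qed
  have c5: "m < Cfun b \<longleftrightarrow> t < sqrt X"
    unfolding Cfun_def t_def X_def a_def by (simp add: field_simps)
  have "\<bar>E\<bar> + F < D \<longleftrightarrow> E + F < D \<and> -E + F < D" by (auto simp: abs_if)
  also have "\<dots> \<longleftrightarrow> qa < 0" using c1 c4 i2 by linarith
  finally show ?thesis using c3 c5 unfolding E_def F_def D_def a_def by simp
qed

lemma lin_part:
  fixes wo wm ws :: real
  assumes "wo \<ge> 0" "wm \<ge> 0" "ws \<ge> 0" "wo + wm + wm + ws = 1"
  shows "lin_cond wo wm wm \<longleftrightarrow> wm < Cfun wo"
proof (cases "wo = 1")
  case True
  then have wm: "wm = 0" using assms by simp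
  have "\<not> lin_cond wo wm wm"
  proof
    assume "lin_cond wo wm wm"
    then obtain x1 x2 x3 :: real where "x1 + x2 + x3 = 1" "\<bar>x1\<bar> + \<bar>x2\<bar> + \<bar>x3\<bar> < 1"
      unfolding lin_cond_def Let_def True wm by auto
    then show False by linarith
  qed
  moreover have "Cfun wo = 0"
  proof -
    have "sqrt 16 = (4::real)" by (simp add: real_sqrt_eq_iff power2_eq_square[symmetric] real_sqrt_unique)
    then show ?thesis unfolding Cfun_def True by simp
  qed
  ultimately show ?thesis using wm by simp
next
  case False
  then have b1: "wo < 1" using assms by simp
  have "lin_cond wo wm wm \<longleftrightarrow> (\<exists>x1 x2 x3. x1 + (wo+wm)*x2 + (wo+wm)*x3 = wo \<and> (wo+wm)*x1 + x2 + wo*x3 = wo+wm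
      \<and> (wo+wm)*x1 + wo*x2 + x3 = wo+wm \<and> \<bar>x1\<bar>+\<bar>x2\<bar>+\<bar>x3\<bar> < 1)"
    unfolding lin_cond_def Let_def by simp
  also have "\<dots> \<longleftrightarrow> \<bar>wo + wo^2 - 2*(wo+wm)^2\<bar> + 2*(wo+wm)*(1-wo) < 1 + wo - 2*(wo+wm)^2"
    by (rule lc_char) (use assms b1 in auto)
  also have "\<dots> \<longleftrightarrow> wm < Cfun wo"
    by (rule cond_equiv) (use assms b1 in auto)
  finally show ?thesis .
qed


theorem corollary1:
  fixes wo wm1 wm2 ws p q :: real and pr :: "stratum \<Rightarrow> real"
  assumes "wo \<ge> 0" "wm1 \<ge> 0" "wm2 \<ge> 0" "ws \<ge> 0"
    and "wo + wm1 + wm2 + ws = 1"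
    and "wm1 = wm2"
    and "0 < q" "q < p" "p < 1" "p + q = 1"
    and "\<And>s. pr s > 0" "(\<Sum>s\<in>UNIV. pr s) = 1"
  shows "(lin_cond wo wm1 wm2 \<longleftrightarrow> wm1 < Cfun wo)
       \<and> (ws > 0 \<and> wm1 < Cfun wo \<longrightarrow>
            (\<forall>x. reachable pr (prob1 p q wo wm1 wm2 ws) (\<lambda>_. 0) x \<longrightarrow>
                 pos_recurrent pr (prob1 p q wo wm1 wm2 ws) x
               \<and> period pr (prob1 p q wo wm1 wm2 ws) x = 2))"
proof -
  interpret chain pr p q wo wm1 wm2 ws
    by unfold_locales (use assms in auto)
  have P1: "lin_cond wo wm1 wm2 \<longleftrightarrow> wm1 < Cfun wo"
    using lin_part[of wo wm1 ws] assms by simp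
  have P2: "pos_recurrent pr (prob1 p q wo wm1 wm2 ws) x \<and> period pr (prob1 p q wo wm1 wm2 ws) x = 2"
    if "ws > 0" for x
    using pos_rec[OF that] period2 by simp
  show ?thesis using P1 P2 by blast
qed

end
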